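(* Define $f:\mathbb{R}^2\to\mathbb{R}$ by $f(\mathbf x)=\sqrt{\log\|\mathbf x\|}$ if $\|\mathbf x\|\ge1$ and $f(\mathbf x)=0$ if $\|\mathbf x\|<1$. Then for all $\mathbf x,\mathbf y\in\mathbb{R}^2$ with $\mathbf x\ne\mathbf 0$, $$f(\mathbf x+\mathbf y)-f(\mathbf x)\le1+\frac{\|\mathbf y\|}{\|\mathbf x\|}.$$ Moreover, for every $\varepsilon\in(0,1)$ there exist constants $r,C>0$ depending on $\varepsilon$ such that for all $\mathbf x$ with $\|\mathbf x\|\ge r$ and all $\mathbf y$ with $\|\mathbf y\|\le\|\mathbf x\|^{1-\varepsilon}$, $$f(\mathbf x+\mathbf y)-f(\mathbf x)\le\frac{1}{2\sqrt{\log\|\mathbf x\|}}\Big(\frac{\mathbf x\cdot\mathbf y}{\|\mathbf x\|^2}+\frac{\|\mathbf y\|^2}{2\|\mathbf x\|^2}-\frac{(\mathbf x\cdot\mathbf y)^2}{\|\mathbf x\|^4}+\frac{C\|\mathbf y\|^2}{\|\mathbf x\|^{2+\varepsilon}}\Big)-\frac{1}{8\log^{3/2}\|\mathbf x\|}\frac{(\mathbf x\cdot\mathbf y)^2}{\|\mathbf x\|^4}+\frac{C\|\mathbf y\|^2}{\|\mathbf x\|^{2+\varepsilon}\log^{3/2}\|\mathbf x\|}.$$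
   Context: $\|\cdot\|$ is the Euclidean norm and $\mathbf x\cdot\mathbf y$ the standard scalar product. *)

theory Defs
  imports "HOL-Analysis.Analysis"
begin

definition flog :: "real^2 \<Rightarrow> real" where
  "flog x = (if norm x \<ge> 1 then sqrt (ln (norm x)) else 0)"

end

theory Submission
  imports Defs
begin


lemma ln3_upper:
  fixes s :: real assumes s: "s > -1"
  shows "ln (1 + s) \<le> s - s^2/2 + s^3/3"
proof -
  define g where "g = (\<lambda>z::real. z - z^2/2 + z^3/3 - ln (1 + z))"
  have d: "(g has_real_derivative (1 - z + z^2 - 1/(1+z))) (at z)" if "z > -1" for z
    unfolding g_def using that
    by (auto intro!: derivative_eq_intros simp: power2_eq_square field_simps)
  have dd: "1 - z + z^2 - 1/(1+z) = z^3/(1+z)" if "z > -1" for z :: real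
    using that by (simp add: field_simps power2_eq_square power3_eq_cube)
  have cont: "continuous_on {a..b} g" if "a > -1" for a b
  proof -
    have "\<forall>z\<in>{a..b}. isCont g z"
      using d that by (metis DERIV_isCont atLeastAtMost_iff less_le_trans)
    then show ?thesis by (simp add: continuous_at_imp_continuous_on)
  qed
  have "g 0 \<le> g s"
  proof (cases "s \<ge> 0")
    case True
    show ?thesis
    proof (rule DERIV_nonneg_imp_increasing_open[of 0 s g, OF True])
      fix z :: real assume "0 < z" "z < s"
      then show "\<exists>y. (g has_real_derivative y) (at z) \<and> 0 \<le> y"
        using d[of z] dd[of z] by (intro exI[of _ "z^3/(1+z)"]) auto
    qed (rule cont, simp)
  next
    case False
    show ?thesis
    proof (rule DERIV_nonpos_imp_decreasing_open[of s 0 g])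
      show "s \<le> 0" using False by simp
      fix z :: real assume zz: "s < z" "z < 0"
        have "z * z \<ge> 0" by simp
        then have "z^3 \<le> 0" using zz by (simp add: power3_eq_cube mult_nonneg_nonpos2 mult.assoc)
        then have "z^3/(1+z) \<le> 0" using zz s by (simp add: divide_nonpos_pos)
        then show "\<exists>y. (g has_real_derivative y) (at z) \<and> y \<le> 0" using d[of z] dd[of z] zz s by (intro exI[of _ "z^3/(1+z)"]) auto
    qed (rule cont, rule s)
  qed
  then show ?thesis by (simp add: g_def)
qed

lemma sqrt_exp3:
  fixes a b :: real assumes a: "a \<ge> 1" and b: "b \<ge> 0"
  shows "b - a \<le> (b^2 - a^2)/(2*a) - (b^2-a^2)^2/(8*a^3) + 3*\<bar>b^2-a^2\<bar>^3/(8*a^3)"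
proof -
  define d where "d = b^2 - a^2"
  have ab: "a + b \<ge> 1" using a b by simp
  have id: "b - a - d/(2*a) + d^2/(8*a^3) = d^3*(b+3*a)/(8*a^3*(a+b)^3)"
  proof -
    have dd: "d = (b-a)*(a+b)" unfolding d_def by (simp add: power2_eq_square algebra_simps)
    have "a + b > 0" "a > 0" using a b by auto
    then show ?thesis unfolding dd by (simp add: divide_simps) algebra
  qed
  have "d^3*(b+3*a) \<le> \<bar>d\<bar>^3 * (3*(a+b))"
  proof -
    have "d^3*(b+3*a) \<le> \<bar>d^3*(b+3*a)\<bar>" by simp
    also have "\<dots> = \<bar>d\<bar>^3 * (b+3*a)" using a b by (simp add: abs_mult power_abs)
    also have "\<dots> \<le> \<bar>d\<bar>^3 * (3*(a+b))" using a b by (intro mult_left_mono) auto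
    finally show ?thesis .
  qed
  then have "d^3*(b+3*a)/(8*a^3*(a+b)^3) \<le> \<bar>d\<bar>^3 * (3*(a+b)) / (8*a^3*(a+b)^3)"
    using a ab by (intro divide_right_mono) auto
  also have "\<dots> = 3*\<bar>d\<bar>^3 / (8*a^3*(a+b)^2)" using a ab by (simp add: divide_simps) algebra
  also have "\<dots> \<le> 3*\<bar>d\<bar>^3 / (8*a^3)"
  proof (rule divide_left_mono)
    have "(a+b)^2 \<ge> 1" using ab by (simp add: one_le_power)
    then show "8*a^3 \<le> 8*a^3*(a+b)^2" using a by simp
  qed (use a ab in \<open>auto intro!: mult_pos_pos\<close>)
  finally show ?thesis using id unfolding d_def by linarith
qed

lemma core:
  fixes u q t a C :: real
  assumes t: "0 < t" "t \<le> 1/8" and q: "0 \<le> q" "q \<le> t^2" and uv: "u^2 \<le> q"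
    and a: "a \<ge> 1" and C: "C \<ge> 100"
  shows "sqrt (a^2 + ln (1+2*u+q)/2) - a \<le> 1/(2*a) * (u + q/2 - u^2 + C* q*t)
            - 1/(8*a^3) * u^2 + C* q*t/a^3"
proof -
  define s where "s = 2*u+q"
  define d where "d = ln (1+s)/2"
  have "u^2 \<le> t^2" using uv q by simp
  then have ua: "\<bar>u\<bar> \<le> t" using t abs_le_square_iff[of u t] by simp
  have "t^2 \<le> t/8" using mult_left_mono[of t "1/8" t] t by (simp add: power2_eq_square)
  then have vt: "q \<le> t/8" using q by simp
  have sa: "\<bar>s\<bar> \<le> 3*t" unfolding s_def using ua vt t q by auto
  have s2: "s^2 \<le> 9* q"
  proof -
    have "(2*u+q)^2 + (2*u-q)^2 = 8*u^2 + 2* q^2" by (simp add: power2_eq_square algebra_simps)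
    moreover have "(2*u-q)^2 \<ge> 0" by simp
    ultimately have "s^2 \<le> 8*u^2 + 2* q^2" unfolding s_def by linarith
    moreover have "q^2 \<le> q/64"
    proof -
      have "q * q \<le> q * (t/8)" using q vt by (intro mult_left_mono) auto
      also have "\<dots> \<le> q * (1/64)" using q t by (intro mult_left_mono) auto
      finally show ?thesis by (simp add: power2_eq_square)
    qed
    ultimately show ?thesis using uv q by linarith
  qed
  have sm: "-1 < s" "\<bar>s\<bar> \<le> 1/2" using sa t by auto
  have l3: "ln (1+s) \<le> s - s^2/2 + s^3/3" using ln3_upper[OF sm(1)] .
  have s3: "s^3 \<le> 27*(t* q)"
  proof -
    have "s^3 = s * s^2" by (simp add: power3_eq_cube power2_eq_square)
    also have "\<dots> \<le> \<bar>s\<bar> * s^2" by (intro mult_right_mono) auto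
    finally have "s^3 \<le> \<bar>s\<bar> * s^2" .
    also have "\<dots> \<le> (3*t)*(9* q)" using sa s2 t by (intro mult_mono) auto
    finally show ?thesis by simp
  qed
  have "(-u) * q \<le> t * q" using ua q by (intro mult_right_mono) auto
  then have uvb: "-(u* q) \<le> t* q" by simp
  have d1: "d \<le> u + q/2 - u^2 + 6* q*t"
  proof -
    have "s - s^2/2 = 2*u+q-2*u^2-2*(u*q)-q^2/2" unfolding s_def by (simp add: power2_eq_square algebra_simps)
    moreover have "q^2 \<ge> 0" "t * q \<ge> 0" using q t by auto
    ultimately have "ln (1+s) \<le> 2*u+q-2*u^2 + 11*(t*q)" using l3 s3 uvb by linarith
    moreover have "6*q*t = 6*(t*q)" by simp
    ultimately show ?thesis unfolding d_def using \<open>t*q \<ge> 0\<close> by linarith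
  qed
  have "\<bar>ln (1+s) - s\<bar> \<le> 2* s^2" using abs_ln_one_plus_x_minus_x_bound[of s] sm by simp
  then have du: "\<bar>d - u\<bar> \<le> 10* q" using s2 q unfolding d_def s_def by (simp add: abs_le_iff)
  have "d^2 = u^2 + 2*(u*(d-u)) + (d-u)^2" by (simp add: power2_eq_square algebra_simps)
  moreover have "u*(d-u) \<ge> -(10*(t* q))"
  proof -
    have "\<bar>u*(d-u)\<bar> \<le> t*(10* q)" unfolding abs_mult using ua du t by (intro mult_mono) auto
    then show ?thesis by (simp add: abs_le_iff)
  qed
  moreover have "(d-u)^2 \<ge> 0" by simp
  ultimately have d2: "-(d^2) \<le> -(u^2) + 20*(t* q)" by linarith
  have da: "\<bar>d\<bar> \<le> 3*t" using du ua vt t by auto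
  have dd2: "d^2 \<le> 6* q"
  proof -
    have "2*u^2 + 2*(d-u)^2 - d^2 = (d - 2*u)^2" by (simp add: power2_eq_square algebra_simps)
    moreover have "(d-2*u)^2 \<ge> 0" by simp
    ultimately have "d^2 \<le> 2*u^2 + 2*(d-u)^2" by linarith
    moreover have "(d-u)^2 \<le> (10* q)^2" using du q abs_le_square_iff[of "d-u" "10*q"] by simp
    moreover have "(10* q)^2 \<le> 2* q"
    proof -
      have "q * q \<le> q * (t/8)" using q vt by (intro mult_left_mono) auto
      also have "\<dots> \<le> q * (1/64)" using q t by (intro mult_left_mono) auto
      finally show ?thesis using q by (simp add: power2_eq_square)
    qed
    ultimately show ?thesis using uv by simp
  qed
  have d3: "\<bar>d\<bar>^3 \<le> 18*(t* q)"
  proof -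
    have "\<bar>d\<bar>^3 = \<bar>d\<bar> * d^2" by (simp add: power3_eq_cube power2_eq_square)
    also have "\<dots> \<le> (3*t)*(6* q)" using da dd2 t by (intro mult_mono) auto
    finally show ?thesis by simp
  qed
  have "a^2 \<ge> 1" using a by (simp add: one_le_power)
  then have "a^2 + d \<ge> 0" using da t by linarith
  define b where "b = sqrt (a^2 + d)"
  have b: "b \<ge> 0" "b^2 - a^2 = d" using \<open>a^2 + d \<ge> 0\<close> unfolding b_def by auto
  have main: "b - a \<le> d/(2*a) - d^2/(8*a^3) + 3*\<bar>d\<bar>^3/(8*a^3)"
    using sqrt_exp3[OF a b(1)] b(2) by simp
  have a3: "a^3 > 0" using a by simp
  have e1: "d/(2*a) \<le> 1/(2*a) * (u + q/2 - u^2 + C* q*t)"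
  proof -
    have "6* q*t \<le> C* q*t" using C q t by (intro mult_right_mono) auto
    then show ?thesis using d1 a by (simp add: divide_right_mono)
  qed
  have e2: "(-(d^2))/(8*a^3) + 3*\<bar>d\<bar>^3/(8*a^3) \<le> - 1/(8*a^3) * u^2 + C* q*t/a^3"
  proof -
    have "-(d^2) + 3*\<bar>d\<bar>^3 \<le> -(u^2) + 8*C*(t* q)"
    proof -
      have "74*(t* q) \<le> 8*C*(t* q)" using C t q by (intro mult_right_mono) auto
      then show ?thesis using d2 d3 by linarith
    qed
    then have "(-(d^2) + 3*\<bar>d\<bar>^3)/(8*a^3) \<le> (-(u^2) + 8*C*(t* q))/(8*a^3)"
      using a3 by (intro divide_right_mono) auto
    then show ?thesis using a3 by (simp add: field_simps)
  qed
  show ?thesis using main e1 e2 unfolding b_def d_def s_def by (simp add: add.assoc)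
qed


lemma sqrt_le_1plus: "z \<ge> 0 \<Longrightarrow> sqrt z \<le> 1 + (z::real)"
proof -
  assume z: "z \<ge> 0"
  have "z \<le> (1 + z)^2" using z by (simp add: power2_eq_square algebra_simps)
  then have "sqrt z \<le> sqrt ((1+z)^2)" by (rule real_sqrt_le_mono)
  then show ?thesis using z by simp
qed

lemma part1:
  fixes x y :: "real^2" assumes x: "x \<noteq> 0"
  shows "flog (x + y) - flog x \<le> 1 + norm y / norm x"
proof -
  define t where "t = norm x"
  define N where "N = norm (x + y)"
  have t0: "t > 0" using x unfolding t_def by simp
  have Nle: "N \<le> t + norm y" unfolding N_def t_def by (rule norm_triangle_ineq)
  have fx: "flog x \<ge> 0" unfolding flog_def by auto
  have yt: "norm y / t \<ge> 0" using t0 by simp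
  show ?thesis
  proof (cases "N \<ge> 1")
    case False
    then have "flog (x+y) = 0" unfolding flog_def N_def by auto
    then show ?thesis using fx yt[unfolded t_def] by linarith
  next
    case N1: True
    have fxy: "flog (x+y) = sqrt (ln N)" using N1 unfolding flog_def N_def by simp
    show ?thesis
    proof (cases "t \<ge> 1")
      case True
      have fx': "flog x = sqrt (ln t)" using True unfolding flog_def t_def by simp
      have lt: "ln t \<ge> 0" using True by simp
      have "ln N - ln t = ln (N / t)" using t0 N1 by (simp add: ln_div)
      also have "\<dots> \<le> N / t - 1" using t0 N1 by (intro ln_le_minus_one) simp
      also have "\<dots> = (N - t) / t" using t0 by (simp add: field_simps)
      also have "\<dots> \<le> norm y / t" using Nle t0 by (intro divide_right_mono) auto
      finally have dz: "ln N - ln t \<le> norm y / t" .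
      show ?thesis
      proof (cases "ln N \<le> ln t")
        case True
        then have "sqrt (ln N) \<le> sqrt (ln t)" by simp
        then show ?thesis unfolding t_def[symmetric] using fxy fx' yt by linarith
      next
        case False
        have "sqrt (ln N) = sqrt (ln t + (ln N - ln t))" by simp
        also have "\<dots> \<le> sqrt (ln t) + sqrt (ln N - ln t)"
          using lt False by (intro sqrt_add_le_add_sqrt) auto
        also have "sqrt (ln N - ln t) \<le> sqrt (norm y / t)" using dz by simp
        also have "\<dots> \<le> 1 + norm y / t" using yt by (rule sqrt_le_1plus)
        finally show ?thesis unfolding t_def[symmetric] using fxy fx' by linarith
      qed
    next
      case False
      have fx': "flog x = 0" using False unfolding flog_def t_def by simp
      have "ln N \<le> N - 1" using N1 by (intro ln_le_minus_one) simp
      also have "\<dots> \<le> norm y" using Nle False by simp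
      also have "\<dots> \<le> norm y / t" using False t0 mult_right_mono[of t 1 "norm y"] by (simp add: field_simps)
      finally have "ln N \<le> norm y / t" .
      moreover have "ln N \<ge> 0" using N1 by simp
      ultimately have "sqrt (ln N) \<le> 1 + norm y / t"
        using sqrt_le_1plus[of "ln N"] by simp
      then show ?thesis unfolding t_def[symmetric] using fxy fx' by linarith
    qed
  qed
qed


lemma part2_point:
  fixes x y :: "real^2" and e r :: real
  assumes e: "0 < e" "e < 1" and r: "r = max (exp 1) (8 powr (1/e))"
    and xr: "norm x \<ge> r" and yx: "norm y \<le> norm x powr (1 - e)"
  shows "flog (x + y) - flog x \<le>
                   1 / (2 * sqrt (ln (norm x))) *
                     ((x \<bullet> y) / norm x ^ 2 + norm y ^ 2 / (2 * norm x ^ 2)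
                      - (x \<bullet> y) ^ 2 / norm x ^ 4
                      + 100 * norm y ^ 2 / norm x powr (2 + e))
                   - 1 / (8 * ln (norm x) powr (3/2)) * ((x \<bullet> y) ^ 2 / norm x ^ 4)
                   + 100 * norm y ^ 2 / (norm x powr (2 + e) * ln (norm x) powr (3/2))"
proof -
  define t where "t = norm x"
  have te: "t \<ge> exp 1" using xr r unfolding t_def by simp
  have t0: "t > 0" using te by (smt (verit) exp_gt_zero)
  have L1: "ln t \<ge> 1" using te t0 by (metis ln_exp ln_le_cancel_iff exp_gt_zero)
  define a where "a = sqrt (ln t)"
  have a1: "a \<ge> 1" unfolding a_def using L1 by simp
  have aL: "a^2 = ln t" unfolding a_def using L1 by simp
  define T where "T = t powr e"
  have T8: "T \<ge> 8"
  proof -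
    have "8 = (8 powr (1/e)) powr e" using e by (simp add: powr_powr)
    also have "\<dots> \<le> t powr e" using xr r e t_def by (intro powr_mono2) auto
    finally show ?thesis unfolding T_def .
  qed
  define tau where "tau = 1 / T"
  have tau: "0 < tau" "tau \<le> 1/8" unfolding tau_def using T8 by auto
  have ytau: "norm y \<le> t * tau"
  proof -
    have "t powr (1 - e) = t powr 1 / t powr e" using t0 by (simp add: powr_diff)
    also have "\<dots> = t * tau" using t0 unfolding tau_def T_def by simp
    finally show ?thesis using yx t_def by simp
  qed
  define u where "u = (x \<bullet> y) / t^2"
  define q where "q = norm y ^ 2 / t^2"
  have q0: "q \<ge> 0" unfolding q_def by simp
  have qt: "q \<le> tau^2"
  proof -
    have "norm y ^ 2 \<le> (t * tau)^2" using ytau by (intro power_mono) auto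
    then show ?thesis unfolding q_def using t0 by (simp add: field_simps power_mult_distrib)
  qed
  have uq: "u^2 \<le> q"
  proof -
    have "\<bar>x \<bullet> y\<bar> \<le> t * norm y" unfolding t_def by (rule Cauchy_Schwarz_ineq2)
    then have "(x \<bullet> y)^2 \<le> (t * norm y)^2" using abs_le_square_iff[of "x \<bullet> y" "t * norm y"] t0 by simp
    then have "(x \<bullet> y)^2 / t^4 \<le> (t * norm y)^2 / t^4" using t0 by (intro divide_right_mono) auto
    have t4: "t^4 = t^2 * t^2" by (simp flip: power_add)
    note * = \<open>(x \<bullet> y)^2 / t^4 \<le> (t * norm y)^2 / t^4\<close>
    have "u^2 = (x \<bullet> y)^2 / t^4" unfolding u_def t4 by (simp add: power_divide power2_eq_square)
    moreover have "(t * norm y)^2 / t^4 = q"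
    proof -
      have "(t * norm y)^2 / t^4 = (t^2 * norm y^2) / (t^2 * t^2)" by (simp only: t4 power_mult_distrib)
      also have "\<dots> = norm y^2 / t^2" using t0 by (intro mult_divide_mult_cancel_left) simp
      finally show ?thesis unfolding q_def .
    qed
    ultimately show ?thesis using * by linarith
  qed
  have nxy2: "norm (x + y) ^ 2 = t^2 * (1 + 2*u + q)"
  proof -
    have "norm (x + y) ^ 2 = norm x ^ 2 + 2 * (x \<bullet> y) + norm y ^ 2"
      by (simp add: power2_norm_eq_inner inner_add_left inner_add_right inner_commute)
    moreover have "t^2 * (1 + 2*u + q) = t^2 + 2*(x \<bullet> y) + norm y^2"
      unfolding u_def q_def using t0 by (simp add: field_simps)
    ultimately show ?thesis unfolding t_def by simp
  qed
  have N1: "norm (x + y) \<ge> 1"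
  proof -
    have "t - norm y \<le> norm (x + y)" unfolding t_def by (metis norm_diff_ineq diff_minus_eq_add norm_minus_cancel)
    moreover have "t * tau \<le> t * (1/8)" using tau t0 by (intro mult_left_mono) auto
    then have "norm y \<le> t / 8" using ytau by simp
    moreover have "t \<ge> 2" using te exp_ge_add_one_self[of 1] by simp
    ultimately show ?thesis by simp
  qed
  have pos: "1 + 2*u + q > 0"
  proof -
    have "norm (x+y) > 0" using N1 by linarith
    then have "norm (x+y)^2 > 0" by simp
    then show ?thesis using nxy2 t0 by (simp add: zero_less_mult_iff)
  qed
  have lnN: "ln (norm (x + y)) = a^2 + ln (1 + 2*u + q) / 2"
  proof -
    have "2 * ln (norm (x+y)) = ln (norm (x + y) ^ 2)" using N1 by (simp add: ln_realpow)
    also have "\<dots> = ln (t^2) + ln (1 + 2*u + q)" using nxy2 t0 pos by (simp add: ln_mult)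
    also have "\<dots> = 2 * ln t + ln (1 + 2*u + q)" using t0 by (simp add: ln_realpow)
    finally show ?thesis using aL by simp
  qed
  have fxy: "flog (x + y) = sqrt (a^2 + ln (1 + 2*u + q)/2)" using N1 lnN unfolding flog_def by simp
  have t1: "t \<ge> 1" using te exp_ge_add_one_self[of 1] by simp
  have fx: "flog x = a" unfolding flog_def a_def using t1 unfolding t_def by simp
  have core': "sqrt (a^2 + ln (1+2*u+q)/2) - a \<le> 1/(2*a) * (u + q/2 - u^2 + 100 * q * tau)
            - 1/(8*a^3) * u^2 + 100 * q * tau / a^3"
    using core[OF tau q0 qt uq a1] by simp
  have L32: "ln t powr (3/2) = a^3"
  proof -
    have "ln t powr (3/2) = (ln t powr (1/2)) ^ 3" using L1 by (simp add: powr_realpow[symmetric] powr_powr)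
    then show ?thesis unfolding a_def using L1 by (simp add: powr_half_sqrt)
  qed
  have P: "t powr (2 + e) = t^2 * T" unfolding T_def using t0 by (simp add: powr_add powr_realpow)
  have r1: "(x \<bullet> y) / t ^ 2 = u" unfolding u_def ..
  have r2: "norm y ^ 2 / (2 * t ^ 2) = q/2" unfolding q_def by simp
  have r3: "(x \<bullet> y) ^ 2 / t ^ 4 = u^2" unfolding u_def by (simp add: power_divide power_mult[symmetric])
  have r4: "100 * norm y ^ 2 / t powr (2 + e) = 100 * q * tau" unfolding P q_def tau_def using t0 T8 by simp
  have r5: "100 * norm y ^ 2 / (t powr (2 + e) * a^3) = 100 * q * tau / a^3"
    unfolding P L32 q_def tau_def using t0 T8 by simp
  show ?thesis unfolding t_def[symmetric] r1 r2 r3 r4 r5 L32 fxy fx a_def[symmetric] using core' by simp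
qed

theorem lemma2p2:
  shows "(\<forall>x y :: real^2. x \<noteq> 0 \<longrightarrow>
            flog (x + y) - flog x \<le> 1 + norm y / norm x)
       \<and> (\<forall>\<epsilon>::real. 0 < \<epsilon> \<and> \<epsilon> < 1 \<longrightarrow>
            (\<exists>r C :: real. r > 0 \<and> C > 0 \<and>
              (\<forall>x y :: real^2. norm x \<ge> r \<and> norm y \<le> norm x powr (1 - \<epsilon>) \<longrightarrow>
                 flog (x + y) - flog x \<le>
                   1 / (2 * sqrt (ln (norm x))) *
                     ((x \<bullet> y) / norm x ^ 2 + norm y ^ 2 / (2 * norm x ^ 2)
                      - (x \<bullet> y) ^ 2 / norm x ^ 4
                      + C * norm y ^ 2 / norm x powr (2 + \<epsilon>))
                   - 1 / (8 * ln (norm x) powr (3/2)) * ((x \<bullet> y) ^ 2 / norm x ^ 4)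
                   + C * norm y ^ 2 / (norm x powr (2 + \<epsilon>) * ln (norm x) powr (3/2)))))"
proof (intro conjI allI impI)
  fix x y :: "real^2" assume "x \<noteq> 0"
  then show "flog (x + y) - flog x \<le> 1 + norm y / norm x" by (rule part1)
next
  fix e :: real assume e: "0 < e \<and> e < 1"
  define r where "r = max (exp 1) (8 powr (1/e))"
  have "r > 0" unfolding r_def by (simp add: less_max_iff_disj)
  then show "\<exists>r C :: real. r > 0 \<and> C > 0 \<and>
              (\<forall>x y :: real^2. norm x \<ge> r \<and> norm y \<le> norm x powr (1 - e) \<longrightarrow>
                 flog (x + y) - flog x \<le>
                   1 / (2 * sqrt (ln (norm x))) *
                     ((x \<bullet> y) / norm x ^ 2 + norm y ^ 2 / (2 * norm x ^ 2)
                      - (x \<bullet> y) ^ 2 / norm x ^ 4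
                      + C * norm y ^ 2 / norm x powr (2 + e))
                   - 1 / (8 * ln (norm x) powr (3/2)) * ((x \<bullet> y) ^ 2 / norm x ^ 4)
                   + C * norm y ^ 2 / (norm x powr (2 + e) * ln (norm x) powr (3/2)))"
    using part2_point[of e r] e r_def by (intro exI[of _ r] exI[of _ 100]) auto
qed

end
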